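(* Let $\overline{\delta}>\underline{\delta}>0$, $\alpha\in(0,1)$, and let $C:[0,1]\to\mathbb{R}^{D\times D}$ be $\alpha$-H\"older continuous with $\overline{\delta}|y|^2\ge y^TC(t)C(t)^Ty\ge\underline{\delta}|y|^2$ for all $y\in\mathbb{R}^D$, $t\in[0,1]$. Define $\Sigma(t,s):=\int_t^sC(u)C(u)^Tdu$ for $0\le t<s\le1$. Then: (1) $\Sigma(t,s)$ is symmetric positive definite and $|\Sigma(t,s)_{ij}|\le\overline{\delta}(s-t)$, $\underline{\delta}(s-t)\le\Sigma(t,s)_{ii}$ for $i,j=1,\dots,D$. (2) $\Sigma(t,s)^{-1}$ exists, is symmetric positive definite, and $\frac1{\overline{\delta}(s-t)}\le\Sigma(t,s)^{-1}_{ii}\le\frac1{\underline{\delta}(s-t)}$; consequently $|\Sigma(t,s)^{-1}_{ij}|\le\frac1{\underline{\delta}(s-t)}$ for $i,j=1,\dots,D$. (3) The lower triangular Cholesky factor $L(t,s)$ in $\Sigma(t,s)=L(t,s)L(t,s)^T$ satisfies $|L(t,s)_{ij}|\le\sqrt{\overline{\delta}(s-t)}$ and $L(t,s)_{ii}\ge\sqrt{\underline{\delta}(s-t)}$ for $i,j=1,\dots,D$. (4) There is a constant $c$ depending only on $\underline{\delta},\overline{\delta},D$ such that $\|L(t_1,s)-L(t_2,s)\|_F\le c\sqrt{t_2-t_1}$ for $0\le t_1<t_2<s\le1$. (5) There is a constant $c$ depending only on $\underline{\delta},\overline{\delta},D$ such that for $i=1,\dots,D$ and $0\le t_1<t_2<s\le1$,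 $$\Big|\sqrt{\Sigma(t_1,s)^{-1}_{ii}}-\sqrt{\Sigma(t_2,s)^{-1}_{ii}}\Big|\le c\min\Big\{\frac1{\sqrt{s-t_2}},\frac{t_2-t_1}{(s-t_2)^{3/2}}\Big\}.$$
   Context: $\|X\|_F$ denotes the Frobenius norm $\big(\sum_{i,j}X_{ij}^2\big)^{1/2}$ of a matrix $X$. *)

theory Defs
  imports "HOL-Analysis.Analysis"
begin

text \<open>Matrices in R^{D x D} are rendered as real^'n^'n with D = CARD('n);
  the index type is well-ordered so that "lower triangular" makes sense.\<close>

definition frob_norm :: "real^'n^'m \<Rightarrow> real" where
  "frob_norm X = sqrt (\<Sum>i\<in>UNIV. \<Sum>j\<in>UNIV. (X $ i $ j)^2)"

definition holder_on01 :: "real \<Rightarrow> (real \<Rightarrow> real^'n^'n) \<Rightarrow> bool" where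
  "holder_on01 \<alpha> C \<longleftrightarrow> (\<exists>K. \<forall>t\<in>{0..1}. \<forall>u\<in>{0..1}.
      frob_norm (C t - C u) \<le> K * \<bar>t - u\<bar> powr \<alpha>)"

definition cov_bounds :: "real \<Rightarrow> real \<Rightarrow> (real \<Rightarrow> real^'n^'n) \<Rightarrow> bool" where
  "cov_bounds dl du C \<longleftrightarrow> (\<forall>t\<in>{0..1}. \<forall>y::real^'n.
      du * (norm y)^2 \<ge> y \<bullet> ((C t ** transpose (C t)) *v y) \<and>
      y \<bullet> ((C t ** transpose (C t)) *v y) \<ge> dl * (norm y)^2)"

definition Sigma_mat :: "(real \<Rightarrow> real^'n^'n) \<Rightarrow> real \<Rightarrow> real \<Rightarrow> real^'n^'n" where
  "Sigma_mat C t s = integral {t..s} (\<lambda>u. C u ** transpose (C u))"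

definition symmetric_mat :: "real^'n^'n \<Rightarrow> bool" where
  "symmetric_mat A \<longleftrightarrow> transpose A = A"

definition pos_def_mat :: "real^'n^'n \<Rightarrow> bool" where
  "pos_def_mat A \<longleftrightarrow> symmetric_mat A \<and> (\<forall>x. x \<noteq> 0 \<longrightarrow> x \<bullet> (A *v x) > 0)"

definition lower_triangular :: "(real^('n::{finite,wellorder})^('n::{finite,wellorder})) \<Rightarrow> bool" where
  "lower_triangular L \<longleftrightarrow> (\<forall>i j. i < j \<longrightarrow> L $ i $ j = 0)"

definition is_cholesky :: "(real^('n::{finite,wellorder})^('n::{finite,wellorder})) \<Rightarrow> real^('n::{finite,wellorder})^('n::{finite,wellorder}) \<Rightarrow> bool" where
  "is_cholesky A L \<longleftrightarrow> lower_triangular L \<and> (\<forall>i. L $ i $ i > 0) \<and> A = L ** transpose L"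

end

theory Submission imports Defs begin

lemma mv_nth: "(A *v x) $ i = (\<Sum>j\<in>UNIV. A$i$j * x$j)"
  by (simp add: matrix_vector_mult_def)

lemma lt_zero_below:
  fixes L :: "real^('n::{finite,wellorder})^('n::{finite,wellorder})"
  assumes lt: "lower_triangular L" and d: "\<forall>i. L$i$i \<noteq> 0"
    and y: "\<forall>i<j. (L *v x)$i = 0"
  shows "\<forall>i<j. x$i = 0"
proof (rule ccontr)
  assume "\<not> (\<forall>i<j. x$i = 0)"
  then have ne: "{i. i<j \<and> x$i \<noteq> 0} \<noteq> {}" by auto
  define m where "m = Min {i. i<j \<and> x$i \<noteq> 0}"
  have mN: "m < j \<and> x$m \<noteq> 0" using Min_in[OF _ ne] unfolding m_def by auto
  have mmin: "\<And>l. l < m \<Longrightarrow> x$l = 0"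
  proof (rule ccontr)
    fix l assume "l < m" "x$l \<noteq> 0"
    then have "l \<in> {i. i<j \<and> x$i \<noteq> 0}" using mN by auto
    then have "m \<le> l" unfolding m_def by simp
    with \<open>l<m\<close> show False by simp
  qed
  have "(L *v x)$m = (\<Sum>l\<in>UNIV. if l = m then L$m$m * x$m else 0)"
    unfolding mv_nth
  proof (rule sum.cong[OF refl])
    fix l show "L$m$l * x$l = (if l = m then L$m$m * x$m else 0)"
      using lt mmin[of l] unfolding lower_triangular_def
      by (cases "l < m"; cases "m < l"; auto)
  qed
  also have "\<dots> = L$m$m * x$m" by simp
  finally have "(L *v x)$m = L$m$m * x$m" .
  moreover have "(L *v x)$m = 0" using y mN by auto
  ultimately show False using d mN by auto
qed

lemma lt_diag_val:
  fixes L :: "real^('n::{finite,wellorder})^('n::{finite,wellorder})"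
  assumes lt: "lower_triangular L" and z: "\<forall>i<j. x$i = 0"
  shows "(L *v x)$j = L$j$j * x$j"
proof -
  have "(L *v x)$j = (\<Sum>l\<in>UNIV. if l = j then L$j$j * x$j else 0)"
    unfolding mv_nth
  proof (rule sum.cong[OF refl])
    fix l show "L$j$l * x$l = (if l = j then L$j$j * x$j else 0)"
      using lt z unfolding lower_triangular_def
      by (cases "l < j"; cases "j < l"; auto)
  qed
  then show ?thesis by simp
qed

lemma ut_zero_above:
  fixes L :: "real^('n::{finite,wellorder})^('n::{finite,wellorder})"
  assumes lt: "lower_triangular L" and d: "\<forall>i. L$i$i \<noteq> 0"
    and y: "\<forall>i>j. (transpose L *v x)$i = 0"
  shows "\<forall>i>j. x$i = 0"
proof (rule ccontr)
  assume "\<not> (\<forall>i>j. x$i = 0)"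
  then have ne: "{i. i>j \<and> x$i \<noteq> 0} \<noteq> {}" by auto
  define m where "m = Max {i. i>j \<and> x$i \<noteq> 0}"
  have mN: "m > j \<and> x$m \<noteq> 0" using Max_in[OF _ ne] unfolding m_def by auto
  have mmax: "\<And>l. l > m \<Longrightarrow> x$l = 0"
  proof (rule ccontr)
    fix l assume "l > m" "x$l \<noteq> 0"
    then have "l \<in> {i. i>j \<and> x$i \<noteq> 0}" using mN by auto
    then have "l \<le> m" unfolding m_def by simp
    with \<open>l>m\<close> show False by simp
  qed
  have "(transpose L *v x)$m = (\<Sum>l\<in>UNIV. if l = m then L$m$m * x$m else 0)"
    unfolding mv_nth transpose_def
  proof (rule sum.cong[OF refl])
    fix l show "(\<chi> i j. L $ j $ i)$m$l * x$l = (if l = m then L$m$m * x$m else 0)"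
      using lt mmax[of l] unfolding lower_triangular_def
      by (cases "l < m"; cases "m < l"; auto)
  qed
  also have "\<dots> = L$m$m * x$m" by simp
  finally have "(transpose L *v x)$m = L$m$m * x$m" .
  moreover have "(transpose L *v x)$m = 0" using y mN by auto
  ultimately show False using d mN by auto
qed

lemma ut_diag_val:
  fixes L :: "real^('n::{finite,wellorder})^('n::{finite,wellorder})"
  assumes lt: "lower_triangular L" and z: "\<forall>i>j. x$i = 0"
  shows "(transpose L *v x)$j = L$j$j * x$j"
proof -
  have "(transpose L *v x)$j = (\<Sum>l\<in>UNIV. if l = j then L$j$j * x$j else 0)"
    unfolding mv_nth transpose_def
  proof (rule sum.cong[OF refl])
    fix l show "(\<chi> i j. L $ j $ i)$j$l * x$l = (if l = j then L$j$j * x$j else 0)"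
      using lt z unfolding lower_triangular_def
      by (cases "l < j"; cases "j < l"; auto)
  qed
  then show ?thesis by simp
qed

lemma lt_invertible:
  fixes L :: "real^('n::{finite,wellorder})^('n::{finite,wellorder})"
  assumes lt: "lower_triangular L" and d: "\<forall>i. L$i$i \<noteq> 0"
  shows "invertible L"
proof -
  have "\<forall>x. L *v x = 0 \<longrightarrow> x = 0"
  proof (intro allI impI)
    fix x assume h: "L *v x = 0"
    show "x = 0" unfolding vec_eq_iff
    proof
      fix j
      have "\<forall>i<j. x$i = 0" using lt_zero_below[OF lt d, of j x] h by simp
      then have "(L *v x)$j = L$j$j * x$j" by (rule lt_diag_val[OF lt])
      then show "x$j = 0$j" using h d by simp
    qed
  qed
  then show ?thesis using matrix_left_invertible_ker invertible_left_inverse by blast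
qed


lemma minv:
  fixes A :: "real^'n^'n"
  assumes "invertible A"
  shows "A ** matrix_inv A = mat 1" "matrix_inv A ** A = mat 1"
proof -
  have "\<exists>A'. A ** A' = mat 1 \<and> A' ** A = mat 1" using assms unfolding invertible_def by blast
  then have "A ** matrix_inv A = mat 1 \<and> matrix_inv A ** A = mat 1"
    unfolding matrix_inv_def by (rule someI_ex)
  then show "A ** matrix_inv A = mat 1" "matrix_inv A ** A = mat 1" by auto
qed

lemma inner_mv_transpose: "inner x ((A::real^'n^'m) *v y) = inner (transpose A *v x) y"
  by (simp add: dot_lmul_matrix)

lemma sym_form:
  fixes A :: "real^'n^'n"
  shows "transpose A = A \<Longrightarrow> inner x (A *v y) = inner y (A *v x)"
  by (metis inner_mv_transpose inner_commute)

lemma mv_axis: "((A::real^'n^'m) *v axis j 1) $ i = A$i$j"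
  by (simp add: mv_nth axis_def if_distrib cong: if_cong)

lemma entry_form: "(A::real^'n^'m) $ i $ j = inner (axis i 1) (A *v axis j 1)"
  by (simp add: inner_axis' mv_axis)

lemma form_add:
  fixes A :: "real^'n^'n"
  assumes "transpose A = A"
  shows "inner (u+v) (A *v (u+v)) = inner u (A *v u) + inner v (A *v v) + 2 * inner u (A *v v)"
  using sym_form[OF assms, of v u]
  by (simp add: matrix_vector_right_distrib inner_add_left inner_add_right)

lemma form_diff:
  fixes A :: "real^'n^'n"
  assumes "transpose A = A"
  shows "inner (u-v) (A *v (u-v)) = inner u (A *v u) + inner v (A *v v) - 2 * inner u (A *v v)"
  using sym_form[OF assms, of v u]
  by (simp add: matrix_vector_mult_diff_distrib inner_diff_left inner_diff_right)

lemma offdiag_bound: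
  fixes A :: "real^'n^'n"
  assumes s: "transpose A = A" and p: "\<forall>x. 0 \<le> inner x (A *v x)"
  shows "\<bar>A$i$j\<bar> \<le> (A$i$i + A$j$j)/2"
proof -
  let ?u = "axis i (1::real)" and ?v = "axis j (1::real)"
  have "0 \<le> inner (?u+?v) (A *v (?u+?v))" "0 \<le> inner (?u-?v) (A *v (?u-?v))" using p by auto
  then show ?thesis unfolding form_add[OF s] form_diff[OF s] entry_form[symmetric] by auto
qed

lemma cs_form:
  fixes A :: "real^'n^'n"
  assumes s: "transpose A = A" and p: "\<forall>x. 0 \<le> inner x (A *v x)" and v: "0 < inner v (A *v v)"
  shows "(inner u (A *v v))^2 \<le> inner u (A *v u) * inner v (A *v v)"
proof -
  define l where "l = inner u (A *v v) / inner v (A *v v)"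
  have "0 \<le> inner (u - l *\<^sub>R v) (A *v (u - l *\<^sub>R v))" using p by auto
  also have "\<dots> = inner u (A *v u) + l^2 * inner v (A *v v) - 2 * l * inner u (A *v v)"
    unfolding form_diff[OF s] by (simp add: matrix_vector_mult_scaleR power2_eq_square)
  also have "\<dots> = inner u (A *v u) - (inner u (A *v v))^2 / inner v (A *v v)"
    unfolding l_def using v by (simp add: field_simps power2_eq_square)
  finally show ?thesis using v by (simp add: field_simps)
qed


definition qb :: "real \<Rightarrow> real \<Rightarrow> real^'n^'n \<Rightarrow> bool" where
  "qb a b A \<longleftrightarrow> transpose A = A \<and> (\<forall>x. a*(norm x)^2 \<le> inner x (A *v x)) \<and> (\<forall>x. inner x (A *v x) \<le> b*(norm x)^2)"

lemma inv_apply: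
  fixes A :: "real^'n^'n"
  assumes "invertible A"
  shows "A *v (matrix_inv A *v x) = x" "matrix_inv A *v (A *v x) = x"
  using minv[OF assms] by (simp_all add: matrix_vector_mul_assoc)

lemma qb_invertible:
  fixes A :: "real^'n^'n"
  assumes q: "qb a b A" and a: "0 < a"
  shows "invertible A"
proof -
  have "\<forall>x. A *v x = 0 \<longrightarrow> x = 0"
  proof (intro allI impI)
    fix x assume "A *v x = 0"
    then have "a * (norm x)^2 \<le> 0" using q unfolding qb_def by (metis inner_zero_right)
    then have "(norm x)^2 \<le> 0" using a by (simp add: mult_le_0_iff)
    then show "x = 0" by simp
  qed
  then show ?thesis using matrix_left_invertible_ker invertible_left_inverse by blast
qed

lemma inv_sym:
  fixes A :: "real^'n^'n"
  assumes i: "invertible A" and s: "transpose A = A"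
  shows "transpose (matrix_inv A) = matrix_inv A"
proof -
  let ?B = "matrix_inv A"
  have "transpose ?B ** A = mat 1"
    using minv(1)[OF i] s by (metis matrix_transpose_mul transpose_mat)
  then have "transpose ?B = transpose ?B ** (A ** ?B)" using minv(1)[OF i] by simp
  also have "\<dots> = ?B" using \<open>transpose ?B ** A = mat 1\<close> by (simp add: matrix_mul_assoc)
  finally show ?thesis .
qed

lemma part12:
  fixes A :: "real^'n^'n"
  assumes q: "qb a b A" and a: "0 < a"
  shows "symmetric_mat A \<and> pos_def_mat A \<and> (\<forall>i j. \<bar>A$i$j\<bar> \<le> b) \<and> (\<forall>i. a \<le> A$i$i) \<and>
    invertible A \<and> symmetric_mat (matrix_inv A) \<and> pos_def_mat (matrix_inv A) \<and>
    (\<forall>i. 1/b \<le> matrix_inv A $ i $ i \<and> matrix_inv A $ i $ i \<le> 1/a) \<and>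
    (\<forall>i j. \<bar>matrix_inv A $ i $ j\<bar> \<le> 1/a)"
proof -
  have s: "transpose A = A" and lo: "\<And>x. a*(norm x)^2 \<le> inner x (A *v x)"
    and hi: "\<And>x. inner x (A *v x) \<le> b*(norm x)^2" using q unfolding qb_def by auto
  have psd: "\<forall>x. 0 \<le> inner x (A *v x)"
    using lo a by (metis mult_nonneg_nonneg less_le zero_le_power2 order_trans)
  have pd: "pos_def_mat A" unfolding pos_def_mat_def symmetric_mat_def
  proof (intro conjI s allI impI)
    fix x :: "real^'n" assume "x \<noteq> 0"
    then have "0 < a * (norm x)^2" using a by simp
    then show "0 < inner x (A *v x)" using lo[of x] by linarith
  qed
  have diag: "\<And>i. a \<le> A$i$i \<and> A$i$i \<le> b"
    using lo[of "axis _ 1"] hi[of "axis _ 1"] by (simp add: entry_form[symmetric])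
  have ent: "\<forall>i j. \<bar>A$i$j\<bar> \<le> b"
  proof (intro allI)
    fix i j show "\<bar>A$i$j\<bar> \<le> b" 
    proof -
      have "(A$i$i + A$j$j)/2 \<le> (b+b)/2" using diag[of i] diag[of j] by (intro divide_right_mono) auto
      then show ?thesis using offdiag_bound[OF s psd, of i j] by simp
    qed
  qed
  have inv: "invertible A" by (rule qb_invertible[OF q a])
  let ?B = "matrix_inv A"
  have sB: "transpose ?B = ?B" by (rule inv_sym[OF inv s])
  have Bform: "inner x (?B *v x) = inner (?B *v x) (A *v (?B *v x))" for x
    using inv_apply(1)[OF inv, of x] by (simp add: inner_commute)
  have pdB: "pos_def_mat ?B" unfolding pos_def_mat_def symmetric_mat_def
  proof (intro conjI sB allI impI)
    fix x :: "real^'n" assume "x \<noteq> 0"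
    then have "?B *v x \<noteq> 0" using inv_apply(1)[OF inv, of x] by auto
    then show "0 < inner x (?B *v x)" using pd unfolding Bform pos_def_mat_def by blast
  qed
  have psdB: "\<forall>x. 0 \<le> inner x (?B *v x)" using pdB unfolding pos_def_mat_def
    by (metis inner_zero_left less_le order_refl)
  have diagB: "1/b \<le> ?B$i$i \<and> ?B$i$i \<le> 1/a" for i
  proof -
    let ?e = "axis i (1::real)" let ?y = "?B *v ?e"
    have Ay: "A *v ?y = ?e" using inv_apply(1)[OF inv] .
    have Bii: "?B$i$i = inner ?y (A *v ?y)" using Bform[of ?e] entry_form[of ?B i i] by simp
    have Bii2: "?B$i$i = ?y $ i" by (simp add: mv_axis)
    have "?y \<noteq> 0" using Ay by (metis axis_eq_0_iff matrix_vector_mult_0_right zero_neq_one)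
    then have ypos: "0 < inner ?y (A *v ?y)" using pd unfolding pos_def_mat_def by blast
    have "a * (norm ?y)^2 \<le> ?y $ i" using lo[of ?y] Bii Bii2 by simp
    also have "\<dots> \<le> norm ?y" by (metis abs_ge_self component_le_norm_cart order_trans)
    finally have "a * (norm ?y)^2 \<le> norm ?y" .
    then have "norm ?y \<le> 1/a" using a
      by (cases "norm ?y = 0") (auto simp: power2_eq_square field_simps)
    then have up: "?B$i$i \<le> 1/a" using Bii2 by (metis abs_ge_self component_le_norm_cart order_trans)
    have "(inner ?e (A *v ?y))^2 \<le> inner ?e (A *v ?e) * inner ?y (A *v ?y)"
      by (rule cs_form[OF s psd ypos])
    then have "1 \<le> A$i$i * ?B$i$i" using Ay Bii by (simp add: entry_form[symmetric])
    then have "1 \<le> b * ?B$i$i" using diag[of i] ypos Bii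
      by (smt (verit) mult_right_mono)
    then have "1/b \<le> ?B$i$i" using diag[of i] a
      by (simp add: divide_le_eq mult.commute)
    with up show ?thesis by simp
  qed
  have entB: "\<forall>i j. \<bar>?B$i$j\<bar> \<le> 1/a"
  proof (intro allI)
    fix i j show "\<bar>?B$i$j\<bar> \<le> 1/a" 
    proof -
      have "(?B$i$i + ?B$j$j)/2 \<le> (1/a+1/a)/2" using diagB[of i] diagB[of j] by (intro divide_right_mono) auto
      then show ?thesis using offdiag_bound[OF sB psdB, of i j] by simp
    qed
  qed
  show ?thesis using pd ent diag inv sB pdB diagB entB
    unfolding symmetric_mat_def pos_def_mat_def by auto
qed


lemma llt_entry: "((L::real^'n^'m) ** transpose L)$i$j = (\<Sum>k\<in>UNIV. L$i$k * L$j$k)"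
  by (simp add: matrix_matrix_mult_def transpose_def)

lemma llt_form: "inner u (((L::real^'n^'m) ** transpose L) *v u) = (norm (transpose L *v u))^2"
  by (simp add: matrix_vector_mul_assoc[symmetric] inner_mv_transpose power2_norm_eq_inner)

lemma comp_sq_le_norm: "(x$i)^2 \<le> (norm (x::real^'n))^2"
  by (metis abs_norm_cancel component_le_norm_cart norm_ge_zero power2_abs power_mono real_norm_def)

lemma ut_solve:
  fixes L :: "real^('n::{finite,wellorder})^('n::{finite,wellorder})"
  assumes lt: "lower_triangular L" and d: "\<forall>i. L$i$i > 0"
  obtains u where "transpose L *v u = axis i 1" "\<forall>k>i. u$k = 0" "u$i = 1 / L$i$i"
proof -
  have d': "\<forall>i. L$i$i \<noteq> 0" using d by (metis less_irrefl)
  have inv: "invertible (transpose L)" using lt_invertible[OF lt d'] transpose_invertible by blast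
  define u where "u = matrix_inv (transpose L) *v axis i 1"
  have eq: "transpose L *v u = axis i 1" unfolding u_def by (rule inv_apply(1)[OF inv])
  have z: "\<forall>k>i. u$k = 0" using ut_zero_above[OF lt d', of i u] eq by (simp add: axis_def)
  have "L$i$i * u$i = 1" using ut_diag_val[OF lt z] eq by simp
  then have "u$i = 1 / L$i$i" using d' by (simp add: field_simps)
  with eq z that show ?thesis by blast
qed

lemma chol_bounds:
  fixes A L :: "real^('n::{finite,wellorder})^('n::{finite,wellorder})"
  assumes q: "qb a b A" and a: "0 < a" and c: "is_cholesky A L"
  shows "(\<forall>i j. \<bar>L$i$j\<bar> \<le> sqrt b) \<and> (\<forall>i. L$i$i \<ge> sqrt a)"
proof -
  have lt: "lower_triangular L" and d: "\<forall>i. L$i$i > 0" and AL: "A = L ** transpose L"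
    using c unfolding is_cholesky_def by auto
  have hi: "\<And>x. inner x (A *v x) \<le> b*(norm x)^2" and lo: "\<And>x. a*(norm x)^2 \<le> inner x (A *v x)"
    using q unfolding qb_def by auto
  have Aii: "A$i$i \<le> b" for i using hi[of "axis i 1"] by (simp add: entry_form[symmetric])
  have 1: "\<bar>L$i$j\<bar> \<le> sqrt b" for i j
  proof -
    have "(L$i$j)^2 = L$i$j * L$i$j" by (simp add: power2_eq_square)
    also have "\<dots> \<le> (\<Sum>k\<in>UNIV. L$i$k * L$i$k)"
      by (rule member_le_sum[where f="\<lambda>k. L$i$k * L$i$k"]) auto
    also have "\<dots> = A$i$i" using AL llt_entry by metis
    also have "\<dots> \<le> b" by (rule Aii)
    finally have "(L$i$j)^2 \<le> b" .
    then show ?thesis using real_sqrt_le_mono by fastforce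
  qed
  have 2: "L$i$i \<ge> sqrt a" for i
  proof -
    obtain u where u: "transpose L *v u = axis i 1" "\<forall>k>i. u$k = 0" "u$i = 1 / L$i$i"
      using ut_solve[OF lt d] by blast
    have "a * (u$i)^2 \<le> a * (norm u)^2" using a comp_sq_le_norm by (simp)
    also have "\<dots> \<le> inner u (A *v u)" by (rule lo)
    also have "\<dots> = 1" unfolding AL llt_form u(1) by simp
    finally have "a * (1 / L$i$i)^2 \<le> 1" using u(3) by simp
    then have "a \<le> (L$i$i)^2" using d by (simp add: field_simps power2_eq_square)
    then show ?thesis using d by (metis less_le real_sqrt_le_mono real_sqrt_abs abs_of_nonneg power2_eq_square real_sqrt_mult_self)
  qed
  show ?thesis using 1 2 by auto
qed


lemma llt_rows: "((L::real^'n^'m) ** transpose L)$i$j = inner (L$i) (L$j)"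
  by (simp add: llt_entry inner_vec_def)

lemma mv_row: "((L::real^'n^'m) *v x)$i = inner (L$i) x"
  by (simp add: mv_nth inner_vec_def)

definition dc :: "('n::{finite,wellorder}) set \<Rightarrow> bool" where
  "dc S \<longleftrightarrow> (\<forall>i j. j \<in> S \<longrightarrow> i \<le> j \<longrightarrow> i \<in> S)"

definition PS :: "real^('n::{finite,wellorder})^('n::{finite,wellorder}) \<Rightarrow> ('n::{finite,wellorder}) set \<Rightarrow> real^('n::{finite,wellorder})^('n::{finite,wellorder}) \<Rightarrow> bool" where
  "PS A S L \<longleftrightarrow> lower_triangular L \<and> (\<forall>i. L$i$i > 0) \<and> (\<forall>i. i \<notin> S \<longrightarrow> L$i = axis i 1) \<and>
     (\<forall>i\<in>S. \<forall>j\<in>S. (L ** transpose L)$i$j = A$i$j)"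

lemma form_agree:
  fixes A B :: "real^'n^'n"
  assumes z: "\<forall>j. j \<notin> S \<longrightarrow> z$j = 0" and w: "\<forall>j. j \<notin> S \<longrightarrow> w$j = 0"
    and ag: "\<forall>i\<in>S. \<forall>j\<in>S. A$i$j = B$i$j"
  shows "inner z (A *v w) = inner z (B *v w)"
  unfolding inner_vec_def mv_nth
proof (rule sum.cong[OF refl])
  fix i
  show "inner (z$i) (\<Sum>j\<in>UNIV. A$i$j * w$j) = inner (z$i) (\<Sum>j\<in>UNIV. B$i$j * w$j)"
  proof (cases "i \<in> S")
    case True
    have "(\<Sum>j\<in>UNIV. A$i$j * w$j) = (\<Sum>j\<in>UNIV. B$i$j * w$j)"
      by (rule sum.cong[OF refl]) (use True ag w in auto)
    then show ?thesis by simp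
  next
    case False then show ?thesis using z by simp
  qed
qed

lemma chol_step:
  fixes A L :: "real^('n::{finite,wellorder})^('n::{finite,wellorder})"
  assumes pd: "pos_def_mat A" and dcS: "dc S" and kS: "k \<notin> S" and kmax: "\<forall>j\<in>S. j < k"
    and P: "PS A S L"
  shows "\<exists>L'. PS A (insert k S) L'"
proof -
  have sA: "transpose A = A" using pd unfolding pos_def_mat_def symmetric_mat_def by auto
  have Asym: "A$i$j = A$j$i" for i j using sA by (metis transpose_def vec_lambda_beta)
  have lt: "lower_triangular L" and d: "\<forall>i. L$i$i > 0" and rowS: "\<And>i. i \<notin> S \<Longrightarrow> L$i = axis i 1"
    and ag: "\<forall>i\<in>S. \<forall>j\<in>S. (L ** transpose L)$i$j = A$i$j" using P unfolding PS_def by auto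
  have d': "\<forall>i. L$i$i \<noteq> 0" using d by (metis less_irrefl)
  have r1: "L$i$j = 0" if "i \<in> S" "j \<notin> S" for i j
  proof -
    have "\<not> j \<le> i" using dcS that unfolding dc_def by blast
    then show ?thesis using lt unfolding lower_triangular_def by auto
  qed
  have r2: "L$i$j = (if j = i then 1 else 0)" if "i \<notin> S" for i j
    using rowS[OF that] by (simp add: axis_def)
  have inv: "invertible L" by (rule lt_invertible[OF lt d'])
  have invT: "invertible (transpose L)" using inv transpose_invertible by blast
  define v where "v = (\<chi> j. if j \<in> S then A$j$k else 0)"
  define x where "x = matrix_inv L *v v"
  have Lx: "L *v x = v" unfolding x_def by (rule inv_apply(1)[OF inv])
  have xz: "x$j = 0" if "j \<notin> S" for j
  proof -
    have "(L *v x)$j = x$j" unfolding mv_row using rowS[OF that] by (simp add: inner_axis')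
    then show ?thesis using Lx that unfolding v_def by simp
  qed
  define z where "z = matrix_inv (transpose L) *v x"
  have Lz: "transpose L *v z = x" unfolding z_def by (rule inv_apply(1)[OF invT])
  have zz: "z$j = 0" if "j \<notin> S" for j
  proof -
    have "(transpose L *v z)$j = (\<Sum>m\<in>UNIV. if m = j then z$m else 0)"
      unfolding mv_nth
    proof (rule sum.cong[OF refl])
      fix m show "transpose L $ j $ m * z $ m = (if m = j then z$m else 0)"
        using r1[of m j] r2[of m j] that by (cases "m \<in> S") (auto simp: transpose_def)
    qed
    then have "(transpose L *v z)$j = z$j" by simp
    then show ?thesis using Lz xz[OF that] by simp
  qed
  let ?e = "axis k (1::real)"
  define y where "y = ?e - z"
  have "y $ k = 1" unfolding y_def using zz[OF kS] by simp
  then have "y \<noteq> 0" by auto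
  then have ypos: "0 < inner y (A *v y)" using pd unfolding pos_def_mat_def by blast
  have t1: "inner ?e (A *v ?e) = A$k$k" by (simp add: entry_form[symmetric])
  have t2: "inner ?e (A *v z) = inner x x"
  proof -
    have "inner ?e (A *v z) = inner z (A *v ?e)" by (rule sym_form[OF sA])
    also have "\<dots> = inner z v"
      unfolding inner_vec_def
    proof (rule sum.cong[OF refl])
      fix j show "inner (z$j) ((A *v ?e)$j) = inner (z$j) (v$j)"
        using zz[of j] by (cases "j \<in> S") (auto simp: mv_axis v_def)
    qed
    also have "\<dots> = inner z (L *v x)" using Lx by simp
    also have "\<dots> = inner x x" using Lz by (simp add: inner_mv_transpose)
    finally show ?thesis .
  qed
  have t3: "inner z (A *v z) = inner x x"
  proof -
    have "inner z (A *v z) = inner z ((L ** transpose L) *v z)"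
      by (rule form_agree[where S=S]) (use zz ag in auto)
    also have "\<dots> = inner x x" unfolding llt_form Lz by (simp add: power2_norm_eq_inner)
    finally show ?thesis .
  qed
  have pos: "0 < A$k$k - inner x x"
    using ypos unfolding y_def form_diff[OF sA] t1 t2 t3 by simp
  define c where "c = sqrt (A$k$k - inner x x)"
  have cpos: "c > 0" unfolding c_def using pos by simp
  define w where "w = x + c *\<^sub>R ?e"
  define L' where "L' = (\<chi> i. if i = k then w else L$i)"
  have L'k: "L'$k = w" and L'o: "\<And>i. i \<noteq> k \<Longrightarrow> L'$i = L$i" unfolding L'_def by auto
  have wj: "w$j = (if j = k then c else x$j)" for j
    unfolding w_def using xz[OF kS] by (auto simp: axis_def)
  have "PS A (insert k S) L'" unfolding PS_def
  proof (intro conjI allI impI ballI)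
    show "lower_triangular L'" unfolding lower_triangular_def
    proof (intro allI impI)
      fix i j :: 'n assume ij: "i < j"
      show "L'$i$j = 0"
      proof (cases "i = k")
        case True
        then have "j \<notin> S" using kmax ij by auto
        then show ?thesis using True ij L'k wj xz by auto
      next
        case False then show ?thesis using L'o lt ij unfolding lower_triangular_def by auto
      qed
    qed
  next
    fix i :: 'n show "L'$i$i > 0"
      using L'k L'o wj cpos d by (cases "i = k") auto
  next
    fix i :: 'n assume "i \<notin> insert k S"
    then show "L'$i = axis i 1" using L'o rowS by auto
  next
    fix i j assume i: "i \<in> insert k S" and j: "j \<in> insert k S"
    have Li_w: "inner (L$m) w = A$m$k" if "m \<in> S" for m
    proof -
      have "inner (L$m) w = inner (L$m) x + c * L$m$k"
        unfolding w_def by (simp add: inner_add_right inner_axis)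
      also have "\<dots> = A$m$k" using Lx r1[OF that kS] that by (simp add: mv_row[symmetric] v_def)
      finally show ?thesis .
    qed
    have ww: "inner w w = A$k$k"
    proof -
      have "inner w w = inner x x + 2 * c * x$k + c^2"
        unfolding w_def by (simp add: inner_add_left inner_add_right inner_axis inner_axis' inner_commute power2_eq_square algebra_simps)
      also have "\<dots> = A$k$k" using xz[OF kS] pos unfolding c_def by simp
      finally show ?thesis .
    qed
    show "(L' ** transpose L')$i$j = A$i$j"
      unfolding llt_rows
    proof (cases "i = k"; cases "j = k")
      assume "i = k" "j = k" then show "inner (L'$i) (L'$j) = A$i$j" using L'k ww by simp
    next
      assume "i = k" "j \<noteq> k" then show "inner (L'$i) (L'$j) = A$i$j"
        using L'k L'o j Li_w[of j] Asym by (simp add: inner_commute)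
    next
      assume "i \<noteq> k" "j = k" then show "inner (L'$i) (L'$j) = A$i$j"
        using L'k L'o i Li_w[of i] by simp
    next
      assume "i \<noteq> k" "j \<noteq> k" then show "inner (L'$i) (L'$j) = A$i$j"
        using L'o i j ag by (simp add: llt_rows)
    qed
  qed
  then show ?thesis by blast
qed


lemma chol_aux:
  fixes A :: "real^('n::{finite,wellorder})^('n::{finite,wellorder})"
  assumes pd: "pos_def_mat A"
  shows "\<forall>S::'n set. dc S \<and> card S = n \<longrightarrow> (\<exists>L. PS A S L)"
proof (induction n)
  case 0
  show ?case
  proof (intro allI impI)
    fix S :: "'n set" assume "dc S \<and> card S = 0"
    then have "S = {}" by simp
    have "PS A S (mat 1)" unfolding PS_def lower_triangular_def using \<open>S = {}\<close>
      by (auto simp: mat_def axis_def vec_eq_iff)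
    then show "\<exists>L. PS A S L" by blast
  qed
next
  case (Suc n)
  show ?case
  proof (intro allI impI)
    fix S :: "'n set" assume h: "dc S \<and> card S = Suc n"
    then have ne: "S \<noteq> {}" by auto
    define k where "k = Max S"
    have kS: "k \<in> S" unfolding k_def using ne by simp
    define S' where "S' = S - {k}"
    have cS': "card S' = n" unfolding S'_def using h kS by simp
    have lessk: "\<forall>j\<in>S'. j < k" unfolding S'_def k_def using ne
      by (metis Diff_iff Max_ge finite less_le singletonI)
    have dcS': "dc S'" unfolding dc_def
    proof (intro allI impI)
      fix i j assume "j \<in> S'" "i \<le> j"
      moreover have "j < k" using \<open>j \<in> S'\<close> lessk by auto
      ultimately have "i \<in> S" "i < k" using h unfolding dc_def S'_def by auto
      then show "i \<in> S'" unfolding S'_def by auto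
    qed
    obtain L where "PS A S' L" using Suc.IH dcS' cS' by blast
    moreover have "k \<notin> S'" by (simp add: S'_def)
    ultimately have "\<exists>L'. PS A (insert k S') L'"
      using chol_step[OF pd dcS' _ lessk] by blast
    moreover have "insert k S' = S" unfolding S'_def using kS by auto
    ultimately show "\<exists>L. PS A S L" by simp
  qed
qed

lemma chol_exists:
  fixes A :: "real^('n::{finite,wellorder})^('n::{finite,wellorder})"
  assumes pd: "pos_def_mat A"
  shows "\<exists>L. is_cholesky A L"
proof -
  obtain L where P: "PS A UNIV L" using chol_aux[OF pd, of "card (UNIV::'n set)"]
    unfolding dc_def by blast
  then have "A = L ** transpose L" unfolding PS_def by (auto simp: vec_eq_iff)
  then show ?thesis using P unfolding is_cholesky_def PS_def by blast
qed


lemma polar_bound: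
  fixes E :: "real^'n^'n"
  assumes s: "transpose E = E" and p: "\<And>x. 0 \<le> inner x (E *v x)" and u: "\<And>x. inner x (E *v x) \<le> K*(norm x)^2"
  shows "\<bar>inner q (E *v p)\<bar> \<le> K * (norm p + norm q)^2 / 4"
proof -
  have eq: "4 * inner q (E *v p) = inner (q+p) (E *v (q+p)) - inner (q-p) (E *v (q-p))"
    unfolding form_add[OF s] form_diff[OF s] by simp
  have K: "0 \<le> K" using p[of "axis undefined 1"] u[of "axis undefined 1"] by simp
  have n1: "(norm (q+p))^2 \<le> (norm p + norm q)^2"
    by (metis add.commute norm_ge_zero norm_triangle_ineq power_mono)
  have n2: "(norm (q-p))^2 \<le> (norm p + norm q)^2"
    by (metis add.commute norm_ge_zero norm_triangle_ineq4 power_mono)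
  have a1: "inner (q+p) (E *v (q+p)) \<le> K * (norm p + norm q)^2"
    using u[of "q+p"] mult_left_mono[OF n1 K] by linarith
  have a2: "inner (q-p) (E *v (q-p)) \<le> K * (norm p + norm q)^2"
    using u[of "q-p"] mult_left_mono[OF n2 K] by linarith
  have "\<bar>4 * inner q (E *v p)\<bar> \<le> K * (norm p + norm q)^2"
    unfolding eq using a1 a2 p[of "q+p"] p[of "q-p"] by linarith
  then show ?thesis by simp
qed

lemma inv_col_norm:
  fixes A :: "real^'n^'n"
  assumes lo: "\<And>x. c*(norm x)^2 \<le> inner x (A *v x)" and c: "0 < c" and Ap: "A *v p = axis i 1"
  shows "norm p \<le> 1/c" "inner p (A *v p) = p$i"
proof -
  show pi: "inner p (A *v p) = p$i" unfolding Ap by (simp add: inner_axis)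
  have "c * (norm p)^2 \<le> p$i" using lo[of p] pi by simp
  also have "\<dots> \<le> norm p" by (metis abs_ge_self component_le_norm_cart order_trans)
  finally have "c * (norm p)^2 \<le> norm p" .
  then show "norm p \<le> 1/c" using c
    by (cases "norm p = 0") (auto simp: power2_eq_square field_simps)
qed

lemma part5_abs:
  fixes A1 A2 E :: "real^'n^'n"
  assumes q2: "qb (a*h) (b*h) A2" and a: "0 < a" and h: "0 < h" and dl: "0 < \<delta>" and b: "0 < b"
    and sE: "transpose E = E" and pE: "\<And>x. 0 \<le> inner x (E *v x)" and uE: "\<And>x. inner x (E *v x) \<le> (b*\<delta>)*(norm x)^2"
    and A1: "A1 = A2 + E"
  shows "\<bar>sqrt (matrix_inv A1 $ i $ i) - sqrt (matrix_inv A2 $ i $ i)\<bar>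
     \<le> max (1/sqrt a) (b * sqrt b / a^2) * min (1 / sqrt h) (\<delta> / h powr (3/2))"
proof -
  have s2: "transpose A2 = A2" and lo2: "\<And>x. (a*h)*(norm x)^2 \<le> inner x (A2 *v x)"
    and hi2: "\<And>x. inner x (A2 *v x) \<le> (b*h)*(norm x)^2" using q2 unfolding qb_def by auto
  have ah: "0 < a*h" using a h by simp
  have s1: "transpose A1 = A1" using s2 sE A1 by (simp add: transpose_def vec_eq_iff)
  have A1x: "inner x (A1 *v x) = inner x (A2 *v x) + inner x (E *v x)" for x
    unfolding A1 by (simp add: matrix_vector_mult_add_rdistrib inner_add_right)
  have lo1: "(a*h)*(norm x)^2 \<le> inner x (A1 *v x)" for x using lo2[of x] pE[of x] A1x[of x] by linarith
  have hi1: "inner x (A1 *v x) \<le> (b*h + b*\<delta>)*(norm x)^2" for x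
    using hi2[of x] uE[of x] A1x[of x] by (simp add: algebra_simps)
  have q1: "qb (a*h) (b*h + b*\<delta>) A1" unfolding qb_def using s1 lo1 hi1 by auto
  note P1 = part12[OF q1 ah] and P2 = part12[OF q2 ah]
  have i1: "invertible A1" and i2: "invertible A2" using P1 P2 by auto
  let ?B1 = "matrix_inv A1" and ?B2 = "matrix_inv A2"
  define p where "p = ?B1 *v axis i 1"
  define q where "q = ?B2 *v axis i 1"
  have Ap: "A1 *v p = axis i 1" unfolding p_def by (rule inv_apply(1)[OF i1])
  have Aq: "A2 *v q = axis i 1" unfolding q_def by (rule inv_apply(1)[OF i2])
  have B1: "?B1 $ i $ i = p $ i" unfolding p_def by (simp add: mv_axis)
  have B2: "?B2 $ i $ i = q $ i" unfolding q_def by (simp add: mv_axis)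
  have np: "norm p \<le> 1/(a*h)" by (rule inv_col_norm(1)[OF lo1 ah Ap])
  have nq: "norm q \<le> 1/(a*h)" by (rule inv_col_norm(1)[OF lo2 ah Aq])
  have pi: "p$i = inner q (A2 *v p)"
  proof -
    have "p$i = inner (A2 *v q) p" unfolding Aq by (simp add: inner_axis')
    also have "\<dots> = inner q (A2 *v p)" using sym_form[OF s2, of q p] inner_mv_transpose s2 by (metis inner_commute)
    finally show ?thesis .
  qed
  have qi: "q$i = inner q (A1 *v p)"
    unfolding Ap by (simp add: inner_axis)
  have diff: "p$i - q$i = - inner q (E *v p)"
    unfolding pi qi A1 by (simp add: matrix_vector_mult_add_rdistrib inner_add_right)
  have "\<bar>inner q (E *v p)\<bar> \<le> (b*\<delta>) * (norm p + norm q)^2 / 4"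
    by (rule polar_bound[OF sE pE uE])
  also have "\<dots> \<le> (b*\<delta>) * (1/(a*h) + 1/(a*h))^2 / 4"
    using np nq b dl by (intro divide_right_mono mult_left_mono power_mono) auto
  also have "\<dots> = b*\<delta>/(a*h)^2" by (simp add: power2_eq_square field_simps)
  finally have dpq: "\<bar>p$i - q$i\<bar> \<le> b*\<delta>/(a*h)^2" using diff by simp
  have "1/(b*h) \<le> ?B2$i$i \<and> ?B2$i$i \<le> 1/(a*h)" using P2 by blast
  then have qlo: "1/(b*h) \<le> q$i" and qhi: "q$i \<le> 1/(a*h)" using B2 by auto
  have "1/(b*h + b*\<delta>) \<le> ?B1$i$i \<and> ?B1$i$i \<le> 1/(a*h)" using P1 by blast
  moreover have "0 < 1/(b*h + b*\<delta>)" using b h dl by (simp add: add_pos_pos)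
  ultimately have plo': "0 < 1/(b*h + b*\<delta>)" "1/(b*h + b*\<delta>) \<le> p$i" and phi: "p$i \<le> 1/(a*h)" using B1 by auto
  have plo: "0 \<le> p$i" using plo' by linarith
  have qpos: "0 < q$i" using qlo b h by (smt (verit) divide_pos_pos mult_pos_pos)
  have bd1: "\<bar>sqrt (p$i) - sqrt (q$i)\<bar> \<le> (1/sqrt a) * (1/sqrt h)"
  proof -
    have "sqrt (p$i) \<le> sqrt (1/(a*h))" "sqrt (q$i) \<le> sqrt (1/(a*h))"
      using phi qhi by (auto intro: real_sqrt_le_mono)
    moreover have "sqrt (1/(a*h)) = (1/sqrt a) * (1/sqrt h)" by (simp add: real_sqrt_divide real_sqrt_mult)
    ultimately show ?thesis using plo qpos by (smt (verit) real_sqrt_ge_zero)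
  qed
  have bd2: "\<bar>sqrt (p$i) - sqrt (q$i)\<bar> \<le> (b * sqrt b / a^2) * (\<delta> / h powr (3/2))"
  proof -
    have sq: "sqrt (q$i) \<ge> 1 / sqrt (b*h)"
      using qlo by (metis real_sqrt_divide real_sqrt_le_mono real_sqrt_one)
    have sqpos: "0 < sqrt (q$i)" using qpos by simp
    have "(sqrt (p$i) - sqrt (q$i)) * (sqrt (p$i) + sqrt (q$i)) = p$i - q$i"
      using plo qpos by (simp add: algebra_simps)
    then have "\<bar>sqrt (p$i) - sqrt (q$i)\<bar> * (sqrt (p$i) + sqrt (q$i)) = \<bar>p$i - q$i\<bar>"
      using plo qpos by (metis abs_mult abs_of_nonneg add_nonneg_nonneg real_sqrt_ge_zero less_imp_le)
    then have "\<bar>sqrt (p$i) - sqrt (q$i)\<bar> * sqrt (q$i) \<le> \<bar>p$i - q$i\<bar>"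
      using plo by (smt (verit) abs_ge_zero mult_left_mono real_sqrt_ge_zero distrib_left)
    then have "\<bar>sqrt (p$i) - sqrt (q$i)\<bar> \<le> \<bar>p$i - q$i\<bar> / sqrt (q$i)"
      using sqpos by (simp add: field_simps)
    also have "\<dots> \<le> \<bar>p$i - q$i\<bar> / (1 / sqrt (b*h))"
      using sq sqpos b h by (intro divide_left_mono) auto
    also have "\<dots> = \<bar>p$i - q$i\<bar> * sqrt (b*h)" by simp
    also have "\<dots> \<le> b*\<delta>/(a*h)^2 * sqrt (b*h)"
      using dpq b h by (intro mult_right_mono) auto
    also have "\<dots> = (b * sqrt b / a^2) * (\<delta> / h powr (3/2))"
    proof -
      have "h powr (3/2) = h powr (1 + 1/2)" by simp
      also have "\<dots> = h powr 1 * h powr (1/2)" by (rule powr_add)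
      also have "\<dots> = h * sqrt h"
        using h by (simp add: powr_half_sqrt)
      finally have "h powr (3/2) = h * sqrt h" .
      then show ?thesis using h a
        by (simp add: real_sqrt_mult power2_eq_square field_simps)
    qed
    finally show ?thesis .
  qed
  have m1: "0 \<le> 1 / sqrt h" using h by simp
  have m2: "0 \<le> \<delta> / h powr (3/2)" using h dl by simp
  define c where "c = max (1/sqrt a) (b * sqrt b / a^2)"
  have "\<bar>sqrt (p$i) - sqrt (q$i)\<bar> \<le> c * (1/sqrt h)"
    using bd1 mult_right_mono[OF max.cobounded1 m1] unfolding c_def by (smt (verit))
  moreover have "\<bar>sqrt (p$i) - sqrt (q$i)\<bar> \<le> c * (\<delta> / h powr (3/2))"
    using bd2 mult_right_mono[OF max.cobounded2 m2] unfolding c_def by (smt (verit))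
  ultimately show ?thesis unfolding B1 B2 c_def[symmetric] by (simp add: min_def)
qed


lemma normsq_vec: "(norm (x::real^'n))^2 = (\<Sum>i\<in>UNIV. (x$i)^2)"
  unfolding power2_norm_eq_inner inner_vec_def by (simp add: power2_eq_square)

lemma normsq_rows: "(norm (X::real^'n^'m))^2 = (\<Sum>i\<in>UNIV. (norm (X$i))^2)"
  by (simp add: power2_norm_eq_inner inner_vec_def)

lemma frob_eq_norm: "frob_norm (X::real^'n^'m) = norm X"
proof -
  have "(norm X)^2 = (\<Sum>i\<in>UNIV. \<Sum>j\<in>UNIV. (X$i$j)^2)" unfolding normsq_rows normsq_vec ..
  then have "frob_norm X = sqrt ((norm X)^2)" unfolding frob_norm_def by simp
  then show ?thesis by simp
qed

lemma norm_mult_bound: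
  fixes A :: "real^'n^'m" and N :: "real^'k^'n"
  assumes K: "\<And>w. (norm (A *v w))^2 \<le> K * (norm w)^2"
  shows "(norm (A ** N))^2 \<le> K * (norm N)^2"
proof -
  have e: "(A ** N)$i$j = (A *v column j N)$i" for i j
    by (simp add: matrix_matrix_mult_def mv_nth column_def)
  have "(norm (A ** N))^2 = (\<Sum>i\<in>UNIV. \<Sum>j\<in>UNIV. ((A *v column j N)$i)^2)"
    unfolding normsq_rows normsq_vec e ..
  also have "\<dots> = (\<Sum>j\<in>UNIV. \<Sum>i\<in>UNIV. ((A *v column j N)$i)^2)" by (rule sum.swap)
  also have "\<dots> = (\<Sum>j\<in>UNIV. (norm (A *v column j N))^2)" unfolding normsq_vec ..
  also have "\<dots> \<le> (\<Sum>j\<in>UNIV. K * (norm (column j N))^2)" by (rule sum_mono) (rule K)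
  also have "\<dots> = K * (\<Sum>j\<in>UNIV. \<Sum>i\<in>UNIV. (N$i$j)^2)"
    by (simp add: sum_distrib_left normsq_vec column_def)
  also have "\<dots> = K * (norm N)^2"
    unfolding normsq_rows normsq_vec by (subst sum.swap) (rule refl)
  finally show ?thesis .
qed

lemma mat1_row: "(mat 1 :: real^'n^'n) $ i = axis i 1"
  by (simp add: mat_def axis_def vec_eq_iff)

lemma part4_abs:
  fixes A1 A2 E L1 L2 :: "real^('n::{finite,wellorder})^('n::{finite,wellorder})"
  assumes q2: "qb (a*h) (b*h) A2" and a: "0 < a" and h: "0 < h" and b: "0 < b" and dl: "0 \<le> \<delta>"
    and sE: "transpose E = E" and pE: "\<And>x. 0 \<le> inner x (E *v x)" and uE: "\<And>x. inner x (E *v x) \<le> (b*\<delta>)*(norm x)^2"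
    and A1: "A1 = A2 + E" and c1: "is_cholesky A1 L1" and c2: "is_cholesky A2 L2"
  shows "(norm (L1 - L2))^2 \<le> real CARD('n) * (b^2 * \<delta> / a)"
proof -
  have s2: "transpose A2 = A2" and lo2: "\<And>x. (a*h)*(norm x)^2 \<le> inner x (A2 *v x)"
    and hi2: "\<And>x. inner x (A2 *v x) \<le> (b*h)*(norm x)^2" using q2 unfolding qb_def by auto
  have lt1: "lower_triangular L1" and d1: "\<forall>i. L1$i$i > 0" and AL1: "A1 = L1 ** transpose L1"
    using c1 unfolding is_cholesky_def by auto
  have lt2: "lower_triangular L2" and d2: "\<forall>i. L2$i$i > 0" and AL2: "A2 = L2 ** transpose L2"
    using c2 unfolding is_cholesky_def by auto
  have d2': "\<forall>i. L2$i$i \<noteq> 0" using d2 by (metis less_irrefl)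
  have A1x: "inner x (A1 *v x) = inner x (A2 *v x) + inner x (E *v x)" for x
    unfolding A1 by (simp add: matrix_vector_mult_add_rdistrib inner_add_right)
  have inv2: "invertible L2" by (rule lt_invertible[OF lt2 d2'])
  define R where "R = matrix_inv L2"
  have LR: "L2 ** R = mat 1" and RL: "R ** L2 = mat 1" unfolding R_def using minv[OF inv2] by auto
  have rowR: "transpose L2 *v (R$i) = axis i 1" for i
  proof -
    have "(transpose L2 *v (R$i))$j = (R ** L2)$i$j" for j
      by (simp add: mv_nth transpose_def matrix_matrix_mult_def mult.commute)
    then show ?thesis unfolding RL mat1_row by (simp add: vec_eq_iff)
  qed
  have Rup: "R$i$k = 0" if "i < k" for i k
  proof -
    define x where "x = R *v axis k 1"
    have "L2 *v x = axis k 1" unfolding x_def R_def by (rule inv_apply(1)[OF inv2])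
    then have "\<forall>i<k. x$i = 0" using lt_zero_below[OF lt2 d2', of k x] by (simp add: axis_def)
    then show ?thesis using that unfolding x_def by (simp add: mv_axis)
  qed
  have Rdiag: "R$i$i = 1 / L2$i$i" for i
  proof -
    define x where "x = R *v axis i 1"
    have Lx: "L2 *v x = axis i 1" unfolding x_def R_def by (rule inv_apply(1)[OF inv2])
    then have "\<forall>k<i. x$k = 0" using lt_zero_below[OF lt2 d2', of i x] by (simp add: axis_def)
    then have "(L2 *v x)$i = L2$i$i * x$i" by (rule lt_diag_val[OF lt2])
    then have "L2$i$i * x$i = 1" using Lx by simp
    then show ?thesis using d2' unfolding x_def by (simp add: mv_axis field_simps)
  qed
  define M where "M = R ** L1"
  have Mrow: "M$i = transpose L1 *v R$i" for i
    by (simp add: M_def vec_eq_iff mv_nth transpose_def matrix_matrix_mult_def mult.commute)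
  have Mdiag: "M$i$i = R$i$i * L1$i$i" for i
  proof -
    have "M$i$i = (\<Sum>k\<in>UNIV. R$i$k * L1$k$i)" unfolding M_def matrix_matrix_mult_def by simp
    also have "\<dots> = (\<Sum>k\<in>UNIV. if k = i then R$i$i * L1$i$i else 0)"
    proof (rule sum.cong[OF refl])
      fix k show "R$i$k * L1$k$i = (if k = i then R$i$i * L1$i$i else 0)"
        using Rup[of i k] lt1 unfolding lower_triangular_def by (cases "i < k"; cases "k < i") auto
    qed
    finally show ?thesis by simp
  qed
  have L12: "L2$i$i \<le> L1$i$i" for i
  proof -
    obtain u where u: "transpose L1 *v u = axis i 1" "\<forall>k>i. u$k = 0" "u$i = 1 / L1$i$i"
      using ut_solve[OF lt1 d1] by blast
    define y where "y = L1$i$i *\<^sub>R u"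
    have y1: "transpose L1 *v y = L1$i$i *\<^sub>R axis i 1" unfolding y_def u(1)[symmetric]
      by (simp add: matrix_vector_mult_scaleR)
    have yz: "\<forall>k>i. y$k = 0" using u(2) unfolding y_def by simp
    have yi: "y$i = 1" using u(3) d1 unfolding y_def by (simp add: less_imp_neq[symmetric])
    have "(transpose L2 *v y)$i = L2$i$i" using ut_diag_val[OF lt2 yz] yi by simp
    then have "(L2$i$i)^2 \<le> (norm (transpose L2 *v y))^2" by (metis comp_sq_le_norm)
    also have "\<dots> = inner y (A2 *v y)" unfolding AL2 llt_form ..
    also have "\<dots> \<le> inner y (A1 *v y)" using A1x[of y] pE[of y] by linarith
    also have "\<dots> = (L1$i$i)^2" unfolding AL1 llt_form y1 by simp
    finally show ?thesis using d1 d2 by (meson less_imp_le power2_le_imp_le)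
  qed
  have Mii: "1 \<le> M$i$i" for i
    unfolding Mdiag Rdiag using L12[of i] d2 by (simp add: less_imp_neq[symmetric] field_simps)
  have rowbound: "(norm (M$i - axis i 1))^2 \<le> b*\<delta>/(a*h)" for i
  proof -
    let ?r = "R$i"
    have "(norm (M$i))^2 = inner ?r (A1 *v ?r)" unfolding Mrow AL1 llt_form ..
    also have "\<dots> = inner ?r (A2 *v ?r) + inner ?r (E *v ?r)" by (rule A1x)
    also have "inner ?r (A2 *v ?r) = 1" unfolding AL2 llt_form rowR by simp
    finally have nM: "(norm (M$i))^2 = 1 + inner ?r (E *v ?r)" .
    have "(a*h) * (norm ?r)^2 \<le> 1" using lo2[of ?r] unfolding AL2 llt_form rowR by simp
    then have nr: "(norm ?r)^2 \<le> 1/(a*h)" using a h by (simp add: field_simps)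
    have "(norm (M$i - axis i 1))^2 = (norm (M$i))^2 - 2 * M$i$i + 1"
      by (simp add: power2_norm_eq_inner inner_diff_left inner_diff_right inner_axis inner_axis' inner_commute)
    also have "\<dots> \<le> inner ?r (E *v ?r)" using nM Mii[of i] by simp
    also have "\<dots> \<le> (b*\<delta>) * (norm ?r)^2" by (rule uE)
    also have "\<dots> \<le> (b*\<delta>) * (1/(a*h))" using nr b dl by (intro mult_left_mono) auto
    finally show ?thesis by simp
  qed
  have nMI: "(norm (M - mat 1))^2 \<le> real CARD('n) * (b*\<delta>/(a*h))"
  proof -
    have "(norm (M - mat 1))^2 = (\<Sum>i\<in>UNIV. (norm (M$i - axis i 1))^2)"
      unfolding normsq_rows by (simp add: mat1_row)
    also have "\<dots> \<le> real (card (UNIV::'n set)) * (b*\<delta>/(a*h))"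
      by (rule sum_bounded_above) (rule rowbound)
    finally show ?thesis by simp
  qed
  have opb: "(norm (L2 *v w))^2 \<le> (b*h) * (norm w)^2" for w
  proof -
    define p where "p = L2 *v w"
    have "(norm (transpose L2 *v p))^2 \<le> (b*h) * (norm p)^2" using hi2[of p] unfolding AL2 llt_form .
    also have "\<dots> = (sqrt (b*h) * norm p)^2" using b h by (simp add: power_mult_distrib)
    finally have t: "norm (transpose L2 *v p) \<le> sqrt (b*h) * norm p"
      by (rule power2_le_imp_le) (use b h in auto)
    have "(norm p)^2 = inner p (L2 *v w)" unfolding p_def by (simp add: power2_norm_eq_inner)
    also have "\<dots> = inner (transpose L2 *v p) w" by (rule inner_mv_transpose)
    also have "\<dots> \<le> norm (transpose L2 *v p) * norm w" by (rule norm_cauchy_schwarz)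
    also have "\<dots> \<le> sqrt (b*h) * norm p * norm w" using t by (simp add: mult_right_mono)
    finally have "(norm p)^2 \<le> sqrt (b*h) * norm p * norm w" .
    then have "norm p \<le> sqrt (b*h) * norm w"
      using b h by (cases "norm p = 0") (auto simp: power2_eq_square)
    then have "(norm p)^2 \<le> (sqrt (b*h) * norm w)^2" by (simp add: power_mono)
    also have "\<dots> = (b*h) * (norm w)^2" using b h by (simp add: power_mult_distrib)
    finally show ?thesis unfolding p_def .
  qed
  have "L2 ** M = L1" unfolding M_def by (simp add: matrix_mul_assoc LR)
  then have "L1 - L2 = L2 ** (M - mat 1)"
    by (metis add_diff_cancel_right' diff_add_cancel matrix_add_ldistrib matrix_mul_rid)
  then have "(norm (L1 - L2))^2 \<le> (b*h) * (norm (M - mat 1))^2"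
    using norm_mult_bound[OF opb] by simp
  also have "\<dots> \<le> (b*h) * (real CARD('n) * (b*\<delta>/(a*h)))"
    using nMI b h by (intro mult_left_mono) auto
  also have "\<dots> = real CARD('n) * (b^2 * \<delta> / a)" using h by (simp add: power2_eq_square field_simps)
  finally show ?thesis .
qed


lemma holder_cont:
  fixes C :: "real \<Rightarrow> real^'n^'n"
  assumes a: "\<alpha> \<in> {0<..<1}" and h: "holder_on01 \<alpha> C"
  shows "continuous_on {0..1} C"
proof -
  obtain K where K: "\<And>t u. t \<in> {0..1} \<Longrightarrow> u \<in> {0..1} \<Longrightarrow> norm (C t - C u) \<le> K * \<bar>t - u\<bar> powr \<alpha>"
    using h unfolding holder_on01_def frob_eq_norm by blast
  have a0: "0 < \<alpha>" using a by auto
  show ?thesis unfolding continuous_on_iff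
  proof (intro ballI allI impI)
    fix x e :: real assume x: "x \<in> {0..1}" and e: "0 < e"
    define K' where "K' = \<bar>K\<bar> + 1"
    have K': "0 < K'" unfolding K'_def by simp
    define d where "d = (e / K') powr (1/\<alpha>)"
    have d: "0 < d" unfolding d_def using e K' by simp
    have dpow: "d powr \<alpha> = e / K'" unfolding d_def using e K' a0 by (simp add: powr_powr)
    show "\<exists>d>0. \<forall>x'\<in>{0..1}. dist x' x < d \<longrightarrow> dist (C x') (C x) < e"
    proof (intro exI conjI ballI impI, rule d)
      fix x' assume x': "x' \<in> {0..1}" and dd: "dist x' x < d"
      have "\<bar>x' - x\<bar> powr \<alpha> < d powr \<alpha>"
        using dd a0 by (intro powr_less_mono2) (auto simp: dist_real_def)
      then have lt: "\<bar>x' - x\<bar> powr \<alpha> < e / K'" using dpow by simp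
      have "dist (C x') (C x) \<le> K * \<bar>x' - x\<bar> powr \<alpha>" using K[OF x' x] by (simp add: dist_norm)
      also have "\<dots> \<le> K' * \<bar>x' - x\<bar> powr \<alpha>" unfolding K'_def
        by (intro mult_right_mono) auto
      also have "\<dots> < K' * (e / K')" using lt K' by (intro mult_strict_left_mono) auto
      also have "\<dots> = e" using K' by simp
      finally show "dist (C x') (C x) < e" .
    qed
  qed
qed

lemma Q_cont:
  fixes C :: "real \<Rightarrow> real^'n^'n"
  assumes "continuous_on S C"
  shows "continuous_on S (\<lambda>u. C u ** transpose (C u))"
proof -
  have eq: "(\<lambda>u. C u ** transpose (C u)) = (\<lambda>u. \<chi> i j. \<Sum>k\<in>UNIV. C u$i$k * C u$j$k)"
    by (simp add: fun_eq_iff matrix_matrix_mult_def transpose_def)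
  show ?thesis unfolding eq by (intro continuous_intros assms)
qed

lemma qf_linear: "bounded_linear (\<lambda>M::real^'n^'n. inner x (M *v x))"
proof -
  have "linear (\<lambda>M::real^'n^'n. inner x (M *v x))"
    by (rule linearI) (simp_all add: matrix_vector_mult_add_rdistrib inner_add_right scaleR_matrix_vector_assoc[symmetric])
  then show ?thesis using linear_conv_bounded_linear by blast
qed

lemma ent_linear: "bounded_linear (\<lambda>M::real^'n^'m. M $ i $ j)"
  by (intro bounded_linear_compose[OF bounded_linear_vec_nth] bounded_linear_vec_nth)

lemma sigma_qb:
  fixes C :: "real \<Rightarrow> real^'n^'n"
  assumes a: "\<alpha> \<in> {0<..<1}" and h: "holder_on01 \<alpha> C" and cb: "cov_bounds dl du C"
    and t: "0 \<le> t" "t \<le> s" "s \<le> 1"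
  shows "qb (dl*(s-t)) (du*(s-t)) (Sigma_mat C t s)"
    and "(\<lambda>u. C u ** transpose (C u)) integrable_on {t..s}"
proof -
  let ?Q = "\<lambda>u. C u ** transpose (C u)"
  have "continuous_on {0..1} ?Q" by (rule Q_cont[OF holder_cont[OF a h]])
  then have "continuous_on {t..s} ?Q" by (rule continuous_on_subset) (use t in auto)
  then show int: "?Q integrable_on {t..s}" by (rule integrable_continuous_interval)
  have ent: "Sigma_mat C t s $ i $ j = integral {t..s} (\<lambda>u. ?Q u $ i $ j)" for i j
    unfolding Sigma_mat_def using integral_linear[OF int ent_linear, of i j] by (simp add: o_def)
  have sym: "transpose (Sigma_mat C t s) = Sigma_mat C t s"
  proof -
    have "?Q u $ i $ j = ?Q u $ j $ i" for u i j by (simp add: matrix_matrix_mult_def transpose_def mult.commute)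
    then have "Sigma_mat C t s $ i $ j = Sigma_mat C t s $ j $ i" for i j unfolding ent by simp
    then show ?thesis by (simp add: transpose_def vec_eq_iff)
  qed
  have qf: "inner x (Sigma_mat C t s *v x) = integral {t..s} (\<lambda>u. inner x (?Q u *v x))" for x
    unfolding Sigma_mat_def using integral_linear[OF int qf_linear, of x] by (simp add: o_def)
  have intx: "(\<lambda>u. inner x (?Q u *v x)) integrable_on {t..s}" for x
    using integrable_linear[OF int qf_linear, of x] by (simp add: o_def)
  have bnd: "dl * (norm x)^2 \<le> inner x (?Q u *v x) \<and> inner x (?Q u *v x) \<le> du * (norm x)^2"
    if "u \<in> {t..s}" for u x
    using cb that t unfolding cov_bounds_def by auto
  have lo: "dl*(s-t)*(norm x)^2 \<le> inner x (Sigma_mat C t s *v x)" for x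
  proof -
    have "integral {t..s} (\<lambda>u. dl * (norm x)^2) \<le> integral {t..s} (\<lambda>u. inner x (?Q u *v x))"
      by (rule integral_le) (use intx bnd in auto)
    then show ?thesis unfolding qf using t by (simp add: ac_simps)
  qed
  have hi: "inner x (Sigma_mat C t s *v x) \<le> du*(s-t)*(norm x)^2" for x
  proof -
    have "integral {t..s} (\<lambda>u. inner x (?Q u *v x)) \<le> integral {t..s} (\<lambda>u. du * (norm x)^2)"
      by (rule integral_le) (use intx bnd in auto)
    then show ?thesis unfolding qf using t by (simp add: ac_simps)
  qed
  show "qb (dl*(s-t)) (du*(s-t)) (Sigma_mat C t s)" unfolding qb_def using sym lo hi by auto
qed

lemma sigma_split:
  fixes C :: "real \<Rightarrow> real^'n^'n"
  assumes a: "\<alpha> \<in> {0<..<1}" and h: "holder_on01 \<alpha> C" and cb: "cov_bounds dl du C"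
    and t: "0 \<le> t1" "t1 \<le> t2" "t2 \<le> s" "s \<le> 1"
  shows "Sigma_mat C t1 s = Sigma_mat C t2 s + Sigma_mat C t1 t2"
proof -
  have int: "(\<lambda>u. C u ** transpose (C u)) integrable_on {t1..s}"
    using sigma_qb(2)[OF a h cb, of t1 s] t by auto
  show ?thesis unfolding Sigma_mat_def using Henstock_Kurzweil_Integration.integral_combine[OF t(2) t(3) int] by (simp add: add.commute)
qed

theorem lemmaA2:
  fixes dl du :: real
  assumes "du > dl" and "dl > 0"
  shows
   "(\<forall>(C :: real \<Rightarrow> real^('n::{finite,wellorder})^('n::{finite,wellorder})) \<alpha> t s.
       \<alpha> \<in> {0<..<1} \<and> holder_on01 \<alpha> C \<and> cov_bounds dl du C \<and> 0 \<le> t \<and> t < s \<and> s \<le> 1 \<longrightarrow>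
       (symmetric_mat (Sigma_mat C t s) \<and> pos_def_mat (Sigma_mat C t s) \<and>
        (\<forall>i j. \<bar>Sigma_mat C t s $ i $ j\<bar> \<le> du * (s - t)) \<and>
        (\<forall>i. dl * (s - t) \<le> Sigma_mat C t s $ i $ i)) \<and>
       (invertible (Sigma_mat C t s) \<and>
        symmetric_mat (matrix_inv (Sigma_mat C t s)) \<and>
        pos_def_mat (matrix_inv (Sigma_mat C t s)) \<and>
        (\<forall>i. 1 / (du * (s - t)) \<le> matrix_inv (Sigma_mat C t s) $ i $ i \<and>
             matrix_inv (Sigma_mat C t s) $ i $ i \<le> 1 / (dl * (s - t))) \<and>
        (\<forall>i j. \<bar>matrix_inv (Sigma_mat C t s) $ i $ j\<bar> \<le> 1 / (dl * (s - t)))) \<and>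
       ((\<exists>L. is_cholesky (Sigma_mat C t s) L) \<and>
        (\<forall>L. is_cholesky (Sigma_mat C t s) L \<longrightarrow>
           (\<forall>i j. \<bar>L $ i $ j\<bar> \<le> sqrt (du * (s - t))) \<and>
           (\<forall>i. L $ i $ i \<ge> sqrt (dl * (s - t))))))
    \<and>
    (\<exists>c. \<forall>(C :: real \<Rightarrow> real^('n::{finite,wellorder})^('n::{finite,wellorder})) \<alpha> t1 t2 s L1 L2.
       \<alpha> \<in> {0<..<1} \<and> holder_on01 \<alpha> C \<and> cov_bounds dl du C \<and>
       0 \<le> t1 \<and> t1 < t2 \<and> t2 < s \<and> s \<le> 1 \<and>
       is_cholesky (Sigma_mat C t1 s) L1 \<and> is_cholesky (Sigma_mat C t2 s) L2 \<longrightarrow>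
       frob_norm (L1 - L2) \<le> c * sqrt (t2 - t1))
    \<and>
    (\<exists>c. \<forall>(C :: real \<Rightarrow> real^('n::{finite,wellorder})^('n::{finite,wellorder})) \<alpha> t1 t2 s i.
       \<alpha> \<in> {0<..<1} \<and> holder_on01 \<alpha> C \<and> cov_bounds dl du C \<and>
       0 \<le> t1 \<and> t1 < t2 \<and> t2 < s \<and> s \<le> 1 \<longrightarrow>
       \<bar>sqrt (matrix_inv (Sigma_mat C t1 s) $ i $ i) - sqrt (matrix_inv (Sigma_mat C t2 s) $ i $ i)\<bar>
         \<le> c * min (1 / sqrt (s - t2)) ((t2 - t1) / (s - t2) powr (3/2)))"
proof -
  have du: "0 < du" using assms by simp
  have dl: "0 < dl" using assms by simp
  have P1: "\<forall>(C :: real \<Rightarrow> real^('n::{finite,wellorder})^('n::{finite,wellorder})) \<alpha> t s.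
       \<alpha> \<in> {0<..<1} \<and> holder_on01 \<alpha> C \<and> cov_bounds dl du C \<and> 0 \<le> t \<and> t < s \<and> s \<le> 1 \<longrightarrow>
       (symmetric_mat (Sigma_mat C t s) \<and> pos_def_mat (Sigma_mat C t s) \<and>
        (\<forall>i j. \<bar>Sigma_mat C t s $ i $ j\<bar> \<le> du * (s - t)) \<and>
        (\<forall>i. dl * (s - t) \<le> Sigma_mat C t s $ i $ i)) \<and>
       (invertible (Sigma_mat C t s) \<and>
        symmetric_mat (matrix_inv (Sigma_mat C t s)) \<and>
        pos_def_mat (matrix_inv (Sigma_mat C t s)) \<and>
        (\<forall>i. 1 / (du * (s - t)) \<le> matrix_inv (Sigma_mat C t s) $ i $ i \<and>
             matrix_inv (Sigma_mat C t s) $ i $ i \<le> 1 / (dl * (s - t))) \<and>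
        (\<forall>i j. \<bar>matrix_inv (Sigma_mat C t s) $ i $ j\<bar> \<le> 1 / (dl * (s - t)))) \<and>
       ((\<exists>L. is_cholesky (Sigma_mat C t s) L) \<and>
        (\<forall>L. is_cholesky (Sigma_mat C t s) L \<longrightarrow>
           (\<forall>i j. \<bar>L $ i $ j\<bar> \<le> sqrt (du * (s - t))) \<and>
           (\<forall>i. L $ i $ i \<ge> sqrt (dl * (s - t)))))"
  proof (intro allI impI)
    fix C :: "real \<Rightarrow> real^('n::{finite,wellorder})^('n::{finite,wellorder})" and \<alpha> t s :: real
    assume H: "\<alpha> \<in> {0<..<1} \<and> holder_on01 \<alpha> C \<and> cov_bounds dl du C \<and> 0 \<le> t \<and> t < s \<and> s \<le> 1"
    have q: "qb (dl*(s-t)) (du*(s-t)) (Sigma_mat C t s)" using sigma_qb(1)[of \<alpha> C dl du t s] H by auto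
    have pos: "0 < dl*(s-t)" using dl H by simp
    note R = part12[OF q pos]
    have ex: "\<exists>L. is_cholesky (Sigma_mat C t s) L" using R chol_exists by blast
    have bd: "\<forall>L. is_cholesky (Sigma_mat C t s) L \<longrightarrow>
           (\<forall>i j. \<bar>L $ i $ j\<bar> \<le> sqrt (du * (s - t))) \<and> (\<forall>i. L $ i $ i \<ge> sqrt (dl * (s - t)))"
      using chol_bounds[OF q pos] by blast
    show "(symmetric_mat (Sigma_mat C t s) \<and> pos_def_mat (Sigma_mat C t s) \<and>
        (\<forall>i j. \<bar>Sigma_mat C t s $ i $ j\<bar> \<le> du * (s - t)) \<and>
        (\<forall>i. dl * (s - t) \<le> Sigma_mat C t s $ i $ i)) \<and>
       (invertible (Sigma_mat C t s) \<and>
        symmetric_mat (matrix_inv (Sigma_mat C t s)) \<and>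
        pos_def_mat (matrix_inv (Sigma_mat C t s)) \<and>
        (\<forall>i. 1 / (du * (s - t)) \<le> matrix_inv (Sigma_mat C t s) $ i $ i \<and>
             matrix_inv (Sigma_mat C t s) $ i $ i \<le> 1 / (dl * (s - t))) \<and>
        (\<forall>i j. \<bar>matrix_inv (Sigma_mat C t s) $ i $ j\<bar> \<le> 1 / (dl * (s - t)))) \<and>
       ((\<exists>L. is_cholesky (Sigma_mat C t s) L) \<and>
        (\<forall>L. is_cholesky (Sigma_mat C t s) L \<longrightarrow>
           (\<forall>i j. \<bar>L $ i $ j\<bar> \<le> sqrt (du * (s - t))) \<and>
           (\<forall>i. L $ i $ i \<ge> sqrt (dl * (s - t)))))"
      using R ex bd by blast
  qed
  have P4: "\<exists>c. \<forall>(C :: real \<Rightarrow> real^('n::{finite,wellorder})^('n::{finite,wellorder})) \<alpha> t1 t2 s L1 L2.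
       \<alpha> \<in> {0<..<1} \<and> holder_on01 \<alpha> C \<and> cov_bounds dl du C \<and>
       0 \<le> t1 \<and> t1 < t2 \<and> t2 < s \<and> s \<le> 1 \<and>
       is_cholesky (Sigma_mat C t1 s) L1 \<and> is_cholesky (Sigma_mat C t2 s) L2 \<longrightarrow>
       frob_norm (L1 - L2) \<le> c * sqrt (t2 - t1)"
  proof (intro exI allI impI)
    fix C :: "real \<Rightarrow> real^('n::{finite,wellorder})^('n::{finite,wellorder})" and \<alpha> t1 t2 s :: real and L1 L2 :: "real^('n::{finite,wellorder})^('n::{finite,wellorder})"
    assume H: "\<alpha> \<in> {0<..<1} \<and> holder_on01 \<alpha> C \<and> cov_bounds dl du C \<and>
       0 \<le> t1 \<and> t1 < t2 \<and> t2 < s \<and> s \<le> 1 \<and>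
       is_cholesky (Sigma_mat C t1 s) L1 \<and> is_cholesky (Sigma_mat C t2 s) L2"
    have q2: "qb (dl*(s-t2)) (du*(s-t2)) (Sigma_mat C t2 s)" using sigma_qb(1)[of \<alpha> C dl du t2 s] H by auto
    have qE: "qb (dl*(t2-t1)) (du*(t2-t1)) (Sigma_mat C t1 t2)" using sigma_qb(1)[of \<alpha> C dl du t1 t2] H by auto
    have split: "Sigma_mat C t1 s = Sigma_mat C t2 s + Sigma_mat C t1 t2"
      using sigma_split[of \<alpha> C dl du t1 t2 s] H by auto
    have sE: "transpose (Sigma_mat C t1 t2) = Sigma_mat C t1 t2" using qE unfolding qb_def by auto
    have pE: "0 \<le> inner x (Sigma_mat C t1 t2 *v x)" for x
    proof -
      have "0 \<le> dl*(t2-t1)*(norm x)^2" using dl H by simp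
      then show ?thesis using qE unfolding qb_def by (meson order_trans)
    qed
    have uE: "inner x (Sigma_mat C t1 t2 *v x) \<le> (du*(t2-t1))*(norm x)^2" for x
      using qE unfolding qb_def by auto
    have "(norm (L1 - L2))^2 \<le> real CARD('n) * (du^2 * (t2-t1) / dl)"
      by (rule part4_abs[OF q2 dl _ du _ sE pE uE split]) (use H in auto)
    then have "norm (L1 - L2) \<le> sqrt (real CARD('n) * (du^2 * (t2-t1) / dl))"
      by (metis norm_ge_zero real_le_rsqrt)
    also have "\<dots> = sqrt (real CARD('n) * du^2 / dl) * sqrt (t2 - t1)"
      by (simp add: real_sqrt_mult[symmetric])
    finally show "frob_norm (L1 - L2) \<le> sqrt (real CARD('n) * du^2 / dl) * sqrt (t2 - t1)"
      unfolding frob_eq_norm .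
  qed
  have P5: "\<exists>c. \<forall>(C :: real \<Rightarrow> real^('n::{finite,wellorder})^('n::{finite,wellorder})) \<alpha> t1 t2 s i.
       \<alpha> \<in> {0<..<1} \<and> holder_on01 \<alpha> C \<and> cov_bounds dl du C \<and>
       0 \<le> t1 \<and> t1 < t2 \<and> t2 < s \<and> s \<le> 1 \<longrightarrow>
       \<bar>sqrt (matrix_inv (Sigma_mat C t1 s) $ i $ i) - sqrt (matrix_inv (Sigma_mat C t2 s) $ i $ i)\<bar>
         \<le> c * min (1 / sqrt (s - t2)) ((t2 - t1) / (s - t2) powr (3/2))"
  proof (intro exI allI impI)
    fix C :: "real \<Rightarrow> real^('n::{finite,wellorder})^('n::{finite,wellorder})" and \<alpha> t1 t2 s :: real and i :: "'n::{finite,wellorder}"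
    assume H: "\<alpha> \<in> {0<..<1} \<and> holder_on01 \<alpha> C \<and> cov_bounds dl du C \<and>
       0 \<le> t1 \<and> t1 < t2 \<and> t2 < s \<and> s \<le> 1"
    have q2: "qb (dl*(s-t2)) (du*(s-t2)) (Sigma_mat C t2 s)" using sigma_qb(1)[of \<alpha> C dl du t2 s] H by auto
    have qE: "qb (dl*(t2-t1)) (du*(t2-t1)) (Sigma_mat C t1 t2)" using sigma_qb(1)[of \<alpha> C dl du t1 t2] H by auto
    have split: "Sigma_mat C t1 s = Sigma_mat C t2 s + Sigma_mat C t1 t2"
      using sigma_split[of \<alpha> C dl du t1 t2 s] H by auto
    have sE: "transpose (Sigma_mat C t1 t2) = Sigma_mat C t1 t2" using qE unfolding qb_def by auto
    have pE: "0 \<le> inner x (Sigma_mat C t1 t2 *v x)" for x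
    proof -
      have "0 \<le> dl*(t2-t1)*(norm x)^2" using dl H by simp
      then show ?thesis using qE unfolding qb_def by (meson order_trans)
    qed
    have uE: "inner x (Sigma_mat C t1 t2 *v x) \<le> (du*(t2-t1))*(norm x)^2" for x
      using qE unfolding qb_def by auto
    show "\<bar>sqrt (matrix_inv (Sigma_mat C t1 s) $ i $ i) - sqrt (matrix_inv (Sigma_mat C t2 s) $ i $ i)\<bar>
         \<le> max (1/sqrt dl) (du * sqrt du / dl^2) * min (1 / sqrt (s - t2)) ((t2 - t1) / (s - t2) powr (3/2))"
      by (rule part5_abs[OF q2 dl _ _ du sE pE uE split]) (use H in auto)
  qed
  show ?thesis using P1 P4 P5 by blast
qed

end
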